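(* Let $k\ge 2$, let $H_0$ be a finite $k$-uniform hypergraph and let $(H_t)_{t\ge0}$ be the ILTH hypergraphs generated from $H_0$. The number of hypertriangles in $H_t$ is $\Theta\left(\left((k-1)^3+3(k-1)\right)^t\right)$.
   Context: A $k$-uniform hypergraph has every hyperedge a $k$-element subset of the vertex set. The ILTH process: given $H_t$, form $H_{t+1}$ by adding for each vertex $x\in V(H_t)$ a new vertex $x'$ (its clone), and taking $E(H_{t+1})=E(H_t)\cup\{(e\setminus\{x\})\cup\{x'\} : e\in E(H_t),\ x\in e\}$. A hypertriangle is a 6-tuple $(u,e_1,v,e_2,w,e_3)$ with $u,v,w$ distinct vertices, $e_1,e_2,e_3$ distinct hyperedges, $u,v\in e_1$, $v,w\in e_2$, $w,u\in e_3$. Asymptotics are as $t\to\infty$ with $k$ and $H_0$ fixed. *)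

theory Defs
  imports Complex_Main "HOL-Library.Landau_Symbols"
begin

type_synonym 'v hypergraph = "'v set \<times> 'v set set"

definition k_uniform_hypergraph :: "nat \<Rightarrow> 'v hypergraph \<Rightarrow> bool" where
  "k_uniform_hypergraph k H \<longleftrightarrow> (\<forall>e\<in>snd H. e \<subseteq> fst H \<and> card e = k)"

text \<open>Vertices of the ILTH hypergraphs: an original vertex of H_0 together with a
  history of clonings. The clone of vertex (x, bs) created at step t is (x, t # bs);
  vertices present in H_t only contain step labels < t, so clones are fresh.\<close>
type_synonym 'a ilth_vertex = "'a \<times> nat list"

definition clone :: "nat \<Rightarrow> 'a ilth_vertex \<Rightarrow> 'a ilth_vertex" where
  "clone t v = (fst v, t # snd v)"

definition ilth_step :: "nat \<Rightarrow> 'a ilth_vertex hypergraph \<Rightarrow> 'a ilth_vertex hypergraph" where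
  "ilth_step t H =
     (fst H \<union> clone t ` fst H,
      snd H \<union> {insert (clone t x) (e - {x}) | e x. e \<in> snd H \<and> x \<in> e})"

fun ilth :: "'a hypergraph \<Rightarrow> nat \<Rightarrow> 'a ilth_vertex hypergraph" where
  "ilth H 0 = ((\<lambda>x. (x, [])) ` fst H, (\<lambda>e. (\<lambda>x. (x, [])) ` e) ` snd H)"
| "ilth H (Suc t) = ilth_step t (ilth H t)"

definition hypertriangles :: "'v hypergraph \<Rightarrow> ('v \<times> 'v set \<times> 'v \<times> 'v set \<times> 'v \<times> 'v set) set" where
  "hypertriangles H = {(u, e1, v, e2, w, e3).
      u \<in> fst H \<and> v \<in> fst H \<and> w \<in> fst H \<and> u \<noteq> v \<and> v \<noteq> w \<and> w \<noteq> u \<and>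
      e1 \<in> snd H \<and> e2 \<in> snd H \<and> e3 \<in> snd H \<and> e1 \<noteq> e2 \<and> e2 \<noteq> e3 \<and> e3 \<noteq> e1 \<and>
      u \<in> e1 \<and> v \<in> e1 \<and> v \<in> e2 \<and> w \<in> e2 \<and> w \<in> e3 \<and> u \<in> e3}"

end

theory Submission
  imports Defs
begin

definition unclone :: "nat \<Rightarrow> 'a ilth_vertex \<Rightarrow> 'a ilth_vertex" where
  "unclone t v = (case snd v of [] \<Rightarrow> v | i # l \<Rightarrow> if i = t then (fst v, l) else v)"

definition nc :: "nat \<Rightarrow> 'a ilth_vertex \<Rightarrow> 'a ilth_vertex set \<Rightarrow> 'a ilth_vertex set" where
  "nc t x e = insert (clone t x) (e - {x})"

definition Var :: "nat \<Rightarrow> 'a ilth_vertex set \<Rightarrow> 'a ilth_vertex \<Rightarrow> 'a ilth_vertex \<Rightarrow> 'a ilth_vertex set set" where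
  "Var t e u v = insert e ((\<lambda>x. nc t x e) ` (e - {u,v}))"

definition walks :: "'v hypergraph \<Rightarrow> ('v \<times> 'v set \<times> 'v \<times> 'v set \<times> 'v \<times> 'v set) set" where
  "walks H = {(u, e1, v, e2, w, e3).
      u \<in> fst H \<and> v \<in> fst H \<and> w \<in> fst H \<and> u \<noteq> v \<and> v \<noteq> w \<and> w \<noteq> u \<and>
      e1 \<in> snd H \<and> e2 \<in> snd H \<and> e3 \<in> snd H \<and>
      u \<in> e1 \<and> v \<in> e1 \<and> v \<in> e2 \<and> w \<in> e2 \<and> w \<in> e3 \<and> u \<in> e3}"

definition Ch6 where
  "Ch6 t u e1 v e2 w e3 =
     (\<lambda>(a,b,c). (u,a,v,b,w,c)) ` (Var t e1 u v \<times> Var t e2 v w \<times> Var t e3 w u)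
   \<union> (\<lambda>b. (clone t u, nc t u e1, v, b, w, nc t u e3)) ` Var t e2 v w
   \<union> (\<lambda>c. (u, nc t v e1, clone t v, nc t v e2, w, c)) ` Var t e3 w u
   \<union> (\<lambda>a. (u, a, v, nc t w e2, clone t w, nc t w e3)) ` Var t e1 u v"

definition Ch where
  "Ch t p = (case p of (u,e1,v,e2,w,e3) \<Rightarrow> Ch6 t u e1 v e2 w e3)"

definition Pm where
  "Pm t q = (case q of (u,a,v,b,w,c) \<Rightarrow>
     (unclone t u, unclone t ` a, unclone t v, unclone t ` b, unclone t w, unclone t ` c))"

lemma unclone_clone[simp]: "unclone t (clone t x) = x"
  by (simp add: unclone_def clone_def)

lemma clone_inj[simp]: "clone t x = clone t y \<longleftrightarrow> x = y"
  by (cases x; cases y) (simp add: clone_def)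

lemma tri_sub_g: "hypertriangles H \<subseteq> walks H"
  by (auto simp: hypertriangles_def walks_def)

locale stp =
  fixes V :: "'a ilth_vertex set" and E and t :: nat and k :: nat
  assumes finV: "finite V" and Esub: "\<And>e. e \<in> E \<Longrightarrow> e \<subseteq> V"
    and Ecard: "\<And>e. e \<in> E \<Longrightarrow> card e = k"
    and lab: "\<And>v i. v \<in> V \<Longrightarrow> i \<in> set (snd v) \<Longrightarrow> i < t"
    and k2: "k \<ge> 2"
begin

lemma clone_notin[simp]: "clone t x \<notin> V"
  using lab[of "clone t x" t] by (auto simp: clone_def)

lemma unclone_old[simp]:
  assumes "v \<in> V" shows "unclone t v = v"
proof (cases "snd v")
  case Nil then show ?thesis by (simp add: unclone_def)
next
  case (Cons i l)
  then have "i \<noteq> t" using lab[of v t] assms by auto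
  then show ?thesis using Cons by (simp add: unclone_def)
qed

lemma clone_notin_E: "e \<in> E \<Longrightarrow> clone t x \<notin> e"
  using Esub clone_notin by blast

lemma unclone_E[simp]: "e \<in> E \<Longrightarrow> unclone t ` e = e"
proof -
  assume "e \<in> E"
  then have "unclone t ` e = id ` e" by (intro image_cong refl) (metis Esub subsetD unclone_old id_apply)
  then show ?thesis by simp
qed

lemma unclone_nc[simp]: "e \<in> E \<Longrightarrow> x \<in> e \<Longrightarrow> unclone t ` nc t x e = e"
proof -
  assume a: "e \<in> E" "x \<in> e"
  have "unclone t ` (e - {x}) = id ` (e - {x})"
    using Esub[OF a(1)] by (intro image_cong) auto
  then show ?thesis using a by (auto simp: nc_def)
qed

lemma clone_mem_nc: "e \<in> E \<Longrightarrow> clone t y \<in> nc t x e \<Longrightarrow> y = x"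
  using clone_notin_E by (auto simp: nc_def)

lemma old_mem_nc: "z \<in> V \<Longrightarrow> z \<in> nc t x e \<Longrightarrow> z \<in> e \<and> z \<noteq> x"
  using clone_notin by (auto simp: nc_def) (metis clone_notin)

lemma E'_iff: "a \<in> snd (ilth_step t (V,E)) \<longleftrightarrow> a \<in> E \<or> (\<exists>e x. e \<in> E \<and> x \<in> e \<and> a = nc t x e)"
  by (auto simp: ilth_step_def nc_def)

lemma V'_iff: "z \<in> fst (ilth_step t (V,E)) \<longleftrightarrow> z \<in> V \<or> (\<exists>y\<in>V. z = clone t y)"
  by (auto simp: ilth_step_def)

lemma pair_lem:
  assumes "a \<in> snd (ilth_step t (V,E))" "z1 \<in> a" "z2 \<in> a" "z1 \<in> V" "z2 \<in> V"
  shows "unclone t ` a \<in> E \<and> z1 \<in> unclone t ` a \<and> z2 \<in> unclone t ` a \<and> a \<in> Var t (unclone t ` a) z1 z2"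
  using assms(1) unfolding E'_iff
proof
  assume aE: "a \<in> E" then have "unclone t ` a = a" by (rule unclone_E)
  then show ?thesis using assms aE by (simp add: Var_def)
next
  assume "\<exists>e x. e \<in> E \<and> x \<in> e \<and> a = nc t x e"
  then obtain e x where ex: "e \<in> E" "x \<in> e" "a = nc t x e" by blast
  have z: "z1 \<in> e \<and> z1 \<noteq> x" "z2 \<in> e \<and> z2 \<noteq> x" using old_mem_nc assms ex by blast+
  have ue: "unclone t ` a = e" unfolding ex(3) by (rule unclone_nc[OF ex(1,2)])
  have "a \<in> (\<lambda>x. nc t x e) ` (e - {z1,z2})"
    by (rule rev_image_eqI[of x]) (use ex z in blast)+
  then show ?thesis unfolding ue Var_def using ex z by blast
qed

lemma clone_lem:
  assumes "a \<in> snd (ilth_step t (V,E))" "clone t y \<in> a" "z \<in> a" "z \<in> V"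
  shows "unclone t ` a \<in> E \<and> y \<in> unclone t ` a \<and> z \<in> unclone t ` a \<and> z \<noteq> y \<and> y \<in> V
     \<and> a = nc t y (unclone t ` a)"
  using assms(1) unfolding E'_iff
proof
  assume "a \<in> E" then show ?thesis using assms clone_notin_E by blast
next
  assume "\<exists>e x. e \<in> E \<and> x \<in> e \<and> a = nc t x e"
  then obtain e x where ex: "e \<in> E" "x \<in> e" "a = nc t x e" by blast
  have yx: "y = x" using clone_mem_nc ex assms by blast
  have z: "z \<in> e \<and> z \<noteq> x" using old_mem_nc assms ex by blast
  have ue: "unclone t ` a = e" unfolding ex(3) by (rule unclone_nc[OF ex(1,2)])
  show ?thesis unfolding ue yx using z ex Esub[of e] by auto
qed

lemma two_clone:
  assumes "a \<in> snd (ilth_step t (V,E))" "clone t y \<in> a" "clone t z \<in> a"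
  shows "y = z"
  using assms(1) unfolding E'_iff
proof
  assume "a \<in> E" then show ?thesis using assms clone_notin_E by blast
next
  assume "\<exists>e x. e \<in> E \<and> x \<in> e \<and> a = nc t x e"
  then show ?thesis using clone_mem_nc assms by blast
qed

lemma clone_neq1[simp]: "x \<in> V \<Longrightarrow> clone t y \<noteq> x"
  using clone_notin by metis
lemma clone_neq2[simp]: "x \<in> V \<Longrightarrow> x \<noteq> clone t y"
  using clone_notin by metis

lemma nc_props:
  assumes "e \<in> E" "y \<in> e"
  shows "nc t y e \<in> snd (ilth_step t (V,E))" "clone t y \<in> nc t y e" "unclone t ` nc t y e = e"
    "\<And>z. z \<in> e \<Longrightarrow> z \<noteq> y \<Longrightarrow> z \<in> nc t y e"
proof -
  show "nc t y e \<in> snd (ilth_step t (V,E))" using assms unfolding E'_iff by blast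
  show "clone t y \<in> nc t y e" by (simp add: nc_def)
  show "unclone t ` nc t y e = e" using assms by (rule unclone_nc)
  show "\<And>z. z \<in> e \<Longrightarrow> z \<noteq> y \<Longrightarrow> z \<in> nc t y e" by (simp add: nc_def)
qed

lemma Var_props:
  assumes "e \<in> E" "u \<in> e" "v \<in> e" "a \<in> Var t e u v"
  shows "a \<in> snd (ilth_step t (V,E)) \<and> u \<in> a \<and> v \<in> a \<and> unclone t ` a = e"
proof -
  consider "a = e" | x where "x \<in> e" "x \<noteq> u" "x \<noteq> v" "a = nc t x e"
    using assms(4) unfolding Var_def by blast
  then show ?thesis
  proof cases
    case 1 then show ?thesis using assms by (simp add: E'_iff)
  next
    case 2 then show ?thesis using assms nc_props[of e x] by metis
  qed
qed

lemma card_Var: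
  assumes "e \<in> E" "u \<in> e" "v \<in> e" "u \<noteq> v"
  shows "finite (Var t e u v)" "card (Var t e u v) = k - 1"
proof -
  have fe: "finite e" using Esub[OF assms(1)] finV finite_subset by blast
  have inj: "inj_on (\<lambda>x. nc t x e) (e - {u,v})"
  proof (rule inj_onI)
    fix x y assume "x \<in> e - {u,v}" "y \<in> e - {u,v}" "nc t x e = nc t y e"
    then have "clone t x \<in> nc t y e" by (metis insertI1 nc_def)
    then show "x = y" using clone_mem_nc assms(1) by blast
  qed
  have notin: "e \<notin> (\<lambda>x. nc t x e) ` (e - {u,v})"
  proof
    assume "e \<in> (\<lambda>x. nc t x e) ` (e - {u,v})"
    then obtain x where "e = nc t x e" by blast
    then have "clone t x \<in> e" by (metis insertI1 nc_def)
    then show False using clone_notin_E assms(1) by blast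
  qed
  have c2: "card (e - {u,v}) = k - 2"
    using card_Diff_subset[of "{u,v}" e] assms fe Ecard[OF assms(1)] by auto
  show "finite (Var t e u v)" using fe by (simp add: Var_def)
  have "card (Var t e u v) = Suc (card ((\<lambda>x. nc t x e) ` (e - {u,v})))"
    unfolding Var_def using notin fe by (simp)
  also have "\<dots> = Suc (k - 2)" using card_image[OF inj] c2 by simp
  also have "\<dots> = k - 1" using k2 by simp
  finally show "card (Var t e u v) = k - 1" .
qed

lemma card_Ch6:
  assumes "(u,e1,v,e2,w,e3) \<in> walks (V,E)"
  shows "finite (Ch6 t u e1 v e2 w e3)" "card (Ch6 t u e1 v e2 w e3) = (k - 1)^3 + 3 * (k - 1)"
proof -
  have h: "u \<in> V" "v \<in> V" "w \<in> V" "u \<noteq> v" "v \<noteq> w" "w \<noteq> u" "e1 \<in> E" "e2 \<in> E" "e3 \<in> E"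
     "u \<in> e1" "v \<in> e1" "v \<in> e2" "w \<in> e2" "w \<in> e3" "u \<in> e3"
    using assms by (auto simp: walks_def)
  have V1: "finite (Var t e1 u v)" "card (Var t e1 u v) = k - 1" using card_Var h by auto
  have V2: "finite (Var t e2 v w)" "card (Var t e2 v w) = k - 1" using card_Var h by auto
  have V3: "finite (Var t e3 w u)" "card (Var t e3 w u) = k - 1" using card_Var h by auto
  define A0 where "A0 = (\<lambda>(a,b,c). (u,a,v,b,w,c)) ` (Var t e1 u v \<times> Var t e2 v w \<times> Var t e3 w u)"
  define A1 where "A1 = (\<lambda>b. (clone t u, nc t u e1, v, b, w, nc t u e3)) ` Var t e2 v w"
  define A2 where "A2 = (\<lambda>c. (u, nc t v e1, clone t v, nc t v e2, w, c)) ` Var t e3 w u"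
  define A3 where "A3 = (\<lambda>a. (u, a, v, nc t w e2, clone t w, nc t w e3)) ` Var t e1 u v"
  have eq: "Ch6 t u e1 v e2 w e3 = A0 \<union> A1 \<union> A2 \<union> A3"
    unfolding Ch6_def A0_def A1_def A2_def A3_def by simp
  have f: "finite A0" "finite A1" "finite A2" "finite A3"
    unfolding A0_def A1_def A2_def A3_def using V1 V2 V3 by auto
  have c0: "card A0 = (k - 1)^3"
  proof -
    have "inj_on (\<lambda>(a,b,c). (u,a,v,b,w,c)) (Var t e1 u v \<times> Var t e2 v w \<times> Var t e3 w u)"
      by (auto simp: inj_on_def)
    then show ?thesis unfolding A0_def using V1 V2 V3
      by (simp add: card_image card_cartesian_product power3_eq_cube)
  qed
  have c1: "card A1 = k - 1" unfolding A1_def using V2 by (subst card_image) (auto simp: inj_on_def)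
  have c2: "card A2 = k - 1" unfolding A2_def using V3 by (subst card_image) (auto simp: inj_on_def)
  have c3: "card A3 = k - 1" unfolding A3_def using V1 by (subst card_image) (auto simp: inj_on_def)
  have d1: "A0 \<inter> A1 = {}" unfolding A0_def A1_def using h by auto
  have d2: "(A0 \<union> A1) \<inter> A2 = {}" unfolding A0_def A1_def A2_def using h by auto
  have d3: "(A0 \<union> A1 \<union> A2) \<inter> A3 = {}" unfolding A0_def A1_def A2_def A3_def using h by auto
  show "finite (Ch6 t u e1 v e2 w e3)" using eq f by simp
  show "card (Ch6 t u e1 v e2 w e3) = (k - 1)^3 + 3 * (k - 1)"
    unfolding eq using f d1 d2 d3 c0 c1 c2 c3
    by (simp add: card_Un_disjoint)
qed

lemma liftA:
  assumes q: "(u,a,v,b,w,c) \<in> walks (ilth_step t (V,E))"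
  shows "Pm t (u,a,v,b,w,c) \<in> walks (V,E) \<and> (u,a,v,b,w,c) \<in> Ch t (Pm t (u,a,v,b,w,c))"
proof -
  let ?E' = "snd (ilth_step t (V,E))"
  have h: "u \<noteq> v" "v \<noteq> w" "w \<noteq> u" "a \<in> ?E'" "b \<in> ?E'" "c \<in> ?E'"
     "u \<in> a" "v \<in> a" "v \<in> b" "w \<in> b" "w \<in> c" "u \<in> c"
    using q by (auto simp: walks_def)
  have hv: "u \<in> V \<or> (\<exists>y\<in>V. u = clone t y)" "v \<in> V \<or> (\<exists>y\<in>V. v = clone t y)"
     "w \<in> V \<or> (\<exists>y\<in>V. w = clone t y)"
    using q unfolding V'_iff[symmetric] by (auto simp: walks_def)
  have nuv: "\<not> ((\<exists>y. u = clone t y) \<and> (\<exists>y. v = clone t y))"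
    using two_clone h by blast
  have nvw: "\<not> ((\<exists>y. v = clone t y) \<and> (\<exists>y. w = clone t y))"
    using two_clone h by blast
  have nwu: "\<not> ((\<exists>y. w = clone t y) \<and> (\<exists>y. u = clone t y))"
    using two_clone h by blast
  consider (O) "u \<in> V" "v \<in> V" "w \<in> V"
    | (U) y where "y \<in> V" "u = clone t y" "v \<in> V" "w \<in> V"
    | (VV) y where "y \<in> V" "v = clone t y" "u \<in> V" "w \<in> V"
    | (W) y where "y \<in> V" "w = clone t y" "u \<in> V" "v \<in> V"
    using hv nuv nvw nwu by blast
  then show ?thesis
  proof cases
    case O
    note pa = pair_lem[OF h(4) h(7) h(8) O(1) O(2)]
    note pb = pair_lem[OF h(5) h(9) h(10) O(2) O(3)]
    note pc = pair_lem[OF h(6) h(11) h(12) O(3) O(1)]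
    have P: "Pm t (u,a,v,b,w,c) = (u, unclone t ` a, v, unclone t ` b, w, unclone t ` c)"
      using O by (simp add: Pm_def)
    have m: "(u,a,v,b,w,c) \<in> (\<lambda>(a,b,c). (u,a,v,b,w,c)) ` (Var t (unclone t ` a) u v \<times> Var t (unclone t ` b) v w \<times> Var t (unclone t ` c) w u)"
      using pa pb pc by (intro rev_image_eqI[of "(a,b,c)"]) auto
    have w: "(u, unclone t ` a, v, unclone t ` b, w, unclone t ` c) \<in> walks (V,E)"
      unfolding walks_def using O pa pb pc h(1-3) by (simp only: mem_Collect_eq prod.case fst_conv snd_conv) blast
    show ?thesis unfolding P Ch_def prod.case Ch6_def using w m by blast
  next
    case U
    note pa = clone_lem[OF h(4) h(7)[unfolded U(2)] h(8) U(3)]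
    note pb = pair_lem[OF h(5) h(9) h(10) U(3) U(4)]
    note pc = clone_lem[OF h(6) h(12)[unfolded U(2)] h(11) U(4)]
    have P: "Pm t (u,a,v,b,w,c) = (y, unclone t ` a, v, unclone t ` b, w, unclone t ` c)"
      using U by (simp add: Pm_def)
    have m: "(u,a,v,b,w,c) \<in> (\<lambda>b. (clone t y, nc t y (unclone t ` a), v, b, w, nc t y (unclone t ` c))) ` Var t (unclone t ` b) v w"
      using pa pb pc U(2) by (intro rev_image_eqI[of b]) auto
    have w: "(y, unclone t ` a, v, unclone t ` b, w, unclone t ` c) \<in> walks (V,E)"
      unfolding walks_def using U pa pb pc h(1-3) by (simp only: mem_Collect_eq prod.case fst_conv snd_conv) blast
    show ?thesis unfolding P Ch_def prod.case Ch6_def using w m by blast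
  next
    case VV
    note pa = clone_lem[OF h(4) h(8)[unfolded VV(2)] h(7) VV(3)]
    note pb = clone_lem[OF h(5) h(9)[unfolded VV(2)] h(10) VV(4)]
    note pc = pair_lem[OF h(6) h(11) h(12) VV(4) VV(3)]
    have P: "Pm t (u,a,v,b,w,c) = (u, unclone t ` a, y, unclone t ` b, w, unclone t ` c)"
      using VV by (simp add: Pm_def)
    have m: "(u,a,v,b,w,c) \<in> (\<lambda>c. (u, nc t y (unclone t ` a), clone t y, nc t y (unclone t ` b), w, c)) ` Var t (unclone t ` c) w u"
      using pa pb pc VV(2) by (intro rev_image_eqI[of c]) auto
    have w: "(u, unclone t ` a, y, unclone t ` b, w, unclone t ` c) \<in> walks (V,E)"
      unfolding walks_def using VV pa pb pc h(1-3) by (simp only: mem_Collect_eq prod.case fst_conv snd_conv) blast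
    show ?thesis unfolding P Ch_def prod.case Ch6_def using w m by blast
  next
    case W
    note pa = pair_lem[OF h(4) h(7) h(8) W(3) W(4)]
    note pb = clone_lem[OF h(5) h(10)[unfolded W(2)] h(9) W(4)]
    note pc = clone_lem[OF h(6) h(11)[unfolded W(2)] h(12) W(3)]
    have P: "Pm t (u,a,v,b,w,c) = (u, unclone t ` a, v, unclone t ` b, y, unclone t ` c)"
      using W by (simp add: Pm_def)
    have m: "(u,a,v,b,w,c) \<in> (\<lambda>a. (u, a, v, nc t y (unclone t ` b), clone t y, nc t y (unclone t ` c))) ` Var t (unclone t ` a) u v"
      using pa pb pc W(2) by (intro rev_image_eqI[of a]) auto
    have w: "(u, unclone t ` a, v, unclone t ` b, y, unclone t ` c) \<in> walks (V,E)"
      unfolding walks_def using W pa pb pc h(1-3) by (simp only: mem_Collect_eq prod.case fst_conv snd_conv) blast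
    show ?thesis unfolding P Ch_def prod.case Ch6_def using w m by blast
  qed
qed

lemma liftB:
  assumes p: "(u,e1,v,e2,w,e3) \<in> walks (V,E)" and q: "q \<in> Ch6 t u e1 v e2 w e3"
  shows "q \<in> walks (ilth_step t (V,E)) \<and> Pm t q = (u,e1,v,e2,w,e3)"
proof -
  have h: "u \<in> V" "v \<in> V" "w \<in> V" "u \<noteq> v" "v \<noteq> w" "w \<noteq> u" "e1 \<in> E" "e2 \<in> E" "e3 \<in> E"
     "u \<in> e1" "v \<in> e1" "v \<in> e2" "w \<in> e2" "w \<in> e3" "u \<in> e3"
    using p by (auto simp: walks_def)
  have V': "\<And>x. x \<in> V \<Longrightarrow> x \<in> fst (ilth_step t (V,E))" "\<And>x. x \<in> V \<Longrightarrow> clone t x \<in> fst (ilth_step t (V,E))"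
    unfolding V'_iff by auto
  note V1 = Var_props[OF h(7) h(10) h(11)]
  note V2 = Var_props[OF h(8) h(12) h(13)]
  note V3 = Var_props[OF h(9) h(14) h(15)]
  note n1u = nc_props[OF h(7) h(10)] and n1v = nc_props[OF h(7) h(11)]
  note n2v = nc_props[OF h(8) h(12)] and n2w = nc_props[OF h(8) h(13)]
  note n3w = nc_props[OF h(9) h(14)] and n3u = nc_props[OF h(9) h(15)]
  from q consider
      (O) a b c where "q = (u,a,v,b,w,c)" "a \<in> Var t e1 u v" "b \<in> Var t e2 v w" "c \<in> Var t e3 w u"
    | (U) b where "q = (clone t u, nc t u e1, v, b, w, nc t u e3)" "b \<in> Var t e2 v w"
    | (VV) c where "q = (u, nc t v e1, clone t v, nc t v e2, w, c)" "c \<in> Var t e3 w u"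
    | (W) a where "q = (u, a, v, nc t w e2, clone t w, nc t w e3)" "a \<in> Var t e1 u v"
    unfolding Ch6_def by (elim UnE imageE; force)
  then show ?thesis
  proof cases
    case O
    then show ?thesis using V1[OF O(2)] V2[OF O(3)] V3[OF O(4)] h V'
      by (auto simp: walks_def Pm_def)
  next
    case U
    then show ?thesis using V2[OF U(2)] h V' n1u n3u
      by (auto simp: walks_def Pm_def)
  next
    case VV
    then show ?thesis using V3[OF VV(2)] h V' n1v n2v
      by (auto simp: walks_def Pm_def)
  next
    case W
    then show ?thesis using V1[OF W(2)] h V' n2w n3w
      by (auto simp: walks_def Pm_def)
  qed
qed

lemma finite_walks: "finite (walks (V,E))"
proof -
  have fE: "finite E" using Esub finV by (meson Pow_iff finite_Pow_iff finite_subset subsetI)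
  have "walks (V,E) \<subseteq> V \<times> E \<times> V \<times> E \<times> V \<times> E" by (auto simp: walks_def)
  then show ?thesis using fE finV by (auto intro: finite_subset)
qed

lemma step_edge:
  assumes "e \<in> snd (ilth_step t (V,E))"
  shows "e \<subseteq> fst (ilth_step t (V,E)) \<and> card e = k"
proof -
  consider "e \<in> E" | e0 x where "e0 \<in> E" "x \<in> e0" "e = nc t x e0" using assms unfolding E'_iff by blast
  then show ?thesis
  proof cases
    case 1 then show ?thesis using Esub Ecard by (auto simp: ilth_step_def)
  next
    case 2
    have fe: "finite e0" using Esub[OF 2(1)] finV finite_subset by blast
    have "clone t x \<notin> e0 - {x}" using clone_notin_E[OF 2(1)] by blast
    then have "card e = Suc (card (e0 - {x}))" using 2 fe by (simp add: nc_def)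
    also have "\<dots> = k" using Ecard[OF 2(1)] 2(2) fe k2 by simp
    finally show ?thesis using 2 Esub[OF 2(1)] by (auto simp: ilth_step_def nc_def)
  qed
qed

lemma step_inv: "stp (fst (ilth_step t (V,E))) (snd (ilth_step t (V,E))) (Suc t) k"
proof (unfold_locales)
  show "finite (fst (ilth_step t (V,E)))" using finV by (simp add: ilth_step_def)
  show "\<And>e. e \<in> snd (ilth_step t (V,E)) \<Longrightarrow> e \<subseteq> fst (ilth_step t (V,E))" using step_edge by blast
  show "\<And>e. e \<in> snd (ilth_step t (V,E)) \<Longrightarrow> card e = k" using step_edge by blast
  show "\<And>v i. v \<in> fst (ilth_step t (V,E)) \<Longrightarrow> i \<in> set (snd v) \<Longrightarrow> i < Suc t"
    using lab by (fastforce simp: ilth_step_def clone_def)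
  show "2 \<le> k" by (rule k2)
qed

lemma count_up: "card (walks (ilth_step t (V,E))) \<le> ((k - 1)^3 + 3 * (k - 1)) * card (walks (V,E))"
proof -
  let ?c = "(k - 1)^3 + 3 * (k - 1)"
  have sub: "walks (ilth_step t (V,E)) \<subseteq> (\<Union>p\<in>walks (V,E). Ch t p)"
  proof
    fix q assume q: "q \<in> walks (ilth_step t (V,E))"
    obtain u a v b w c where qq: "q = (u,a,v,b,w,c)" by (cases q) auto
    show "q \<in> (\<Union>p\<in>walks (V,E). Ch t p)" using liftA[of u a v b w c] q unfolding qq by blast
  qed
  have ch: "finite (Ch t p) \<and> card (Ch t p) = ?c" if "p \<in> walks (V,E)" for p
  proof -
    obtain u e1 v e2 w e3 where pp: "p = (u,e1,v,e2,w,e3)" by (cases p) auto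
    show ?thesis using card_Ch6[of u e1 v e2 w e3] that unfolding pp Ch_def by simp
  qed
  have "card (walks (ilth_step t (V,E))) \<le> card (\<Union>p\<in>walks (V,E). Ch t p)"
    using sub ch finite_walks by (intro card_mono) auto
  also have "\<dots> \<le> (\<Sum>p\<in>walks (V,E). card (Ch t p))" using finite_walks by (rule card_UN_le)
  also have "\<dots> = (\<Sum>p\<in>walks (V,E). ?c)" using ch by (intro sum.cong) auto
  also have "\<dots> = ?c * card (walks (V,E))" by simp
  finally show ?thesis .
qed

lemma tri_sub: "hypertriangles H \<subseteq> walks H"
  by (auto simp: hypertriangles_def walks_def)

lemma count_low: "((k - 1)^3 + 3 * (k - 1)) * card (hypertriangles (V,E)) \<le> card (hypertriangles (ilth_step t (V,E)))"
proof -
  let ?c = "(k - 1)^3 + 3 * (k - 1)"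
  let ?T = "hypertriangles (V,E)"
  have fT: "finite ?T" using finite_walks tri_sub finite_subset by blast
  have fT': "finite (hypertriangles (ilth_step t (V,E)))"
    using stp.finite_walks[OF step_inv] tri_sub finite_subset by (metis prod.collapse)
  have lB: "q \<in> walks (ilth_step t (V,E)) \<and> Pm t q = p" if "p \<in> walks (V,E)" "q \<in> Ch t p" for p q
  proof -
    obtain u e1 v e2 w e3 where pp: "p = (u,e1,v,e2,w,e3)" by (cases p) auto
    show ?thesis using liftB[of u e1 v e2 w e3 q] that unfolding pp Ch_def by simp
  qed
  have ch: "finite (Ch t p) \<and> card (Ch t p) = ?c" if "p \<in> walks (V,E)" for p
  proof -
    obtain u e1 v e2 w e3 where pp: "p = (u,e1,v,e2,w,e3)" by (cases p) auto
    show ?thesis using card_Ch6[of u e1 v e2 w e3] that unfolding pp Ch_def by simp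
  qed
  have sub: "(\<Union>p\<in>?T. Ch t p) \<subseteq> hypertriangles (ilth_step t (V,E))"
  proof clarify
    fix p q assume p: "p \<in> ?T" and q: "q \<in> Ch t p"
    have pw: "p \<in> walks (V,E)" using p tri_sub by blast
    obtain u a v b w c where qq: "q = (u,a,v,b,w,c)" by (cases q) auto
    have qw: "q \<in> walks (ilth_step t (V,E))" and Pq: "Pm t q = p" using lB[OF pw q] by auto
    have "(u, unclone t ` a, v', unclone t ` b, w', unclone t ` c) \<in> ?T \<Longrightarrow> a \<noteq> b \<and> b \<noteq> c \<and> c \<noteq> a"
      for v' w' by (auto simp: hypertriangles_def)
    have "unclone t ` a \<noteq> unclone t ` b \<and> unclone t ` b \<noteq> unclone t ` c \<and> unclone t ` c \<noteq> unclone t ` a"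
      using p Pq unfolding qq Pm_def by (auto simp: hypertriangles_def)
    then show "q \<in> hypertriangles (ilth_step t (V,E))"
      using qw unfolding qq by (auto simp: hypertriangles_def walks_def)
  qed
  have "(\<Sum>p\<in>?T. card (Ch t p)) = (\<Sum>p\<in>?T. ?c)"
    by (rule sum.cong) (use ch tri_sub in blast)+
  then have "?c * card ?T = (\<Sum>p\<in>?T. card (Ch t p))" by simp
  also have "\<dots> = card (\<Union>p\<in>?T. Ch t p)"
  proof (rule card_UN_disjoint[symmetric])
    show "finite ?T" by (rule fT)
    show "\<forall>p\<in>?T. finite (Ch t p)" using ch tri_sub by blast
    show "\<forall>p\<in>?T. \<forall>p'\<in>?T. p \<noteq> p' \<longrightarrow> Ch t p \<inter> Ch t p' = {}"
      using lB tri_sub by blast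
  qed
  also have "\<dots> \<le> card (hypertriangles (ilth_step t (V,E)))" using sub fT' by (rule card_mono[rotated])
  finally show ?thesis .
qed

end

lemma ilth_inv:
  assumes k: "k \<ge> 2" and fin: "finite (fst H0)" and ku: "k_uniform_hypergraph k H0"
  shows "stp (fst (ilth H0 t)) (snd (ilth H0 t)) t k"
proof (induction t)
  case 0
  have inj: "inj_on (\<lambda>x. (x, [] :: nat list)) A" for A :: "'a set" by (auto simp: inj_on_def)
  show ?case
  proof (unfold_locales)
    show "finite (fst (ilth H0 0))" using fin by simp
    show "\<And>e. e \<in> snd (ilth H0 0) \<Longrightarrow> e \<subseteq> fst (ilth H0 0)"
      using ku unfolding k_uniform_hypergraph_def by auto
    show "\<And>e. e \<in> snd (ilth H0 0) \<Longrightarrow> card e = k"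
      using ku unfolding k_uniform_hypergraph_def by (auto simp: card_image[OF inj])
    show "\<And>v i. v \<in> fst (ilth H0 0) \<Longrightarrow> i \<in> set (snd v) \<Longrightarrow> i < 0" by auto
    show "2 \<le> k" by (rule k)
  qed
next
  case (Suc t)
  have "ilth H0 (Suc t) = ilth_step t (fst (ilth H0 t), snd (ilth H0 t))" by simp
  then show ?case using stp.step_inv[OF Suc] by simp
qed

lemma walks_step:
  assumes "stp (fst H) (snd H) t k"
  shows "card (walks (ilth_step t H)) \<le> ((k - 1)^3 + 3 * (k - 1)) * card (walks H)"
    "((k - 1)^3 + 3 * (k - 1)) * card (hypertriangles H) \<le> card (hypertriangles (ilth_step t H))"
    "finite (walks H)"
  using stp.count_up[OF assms] stp.count_low[OF assms] stp.finite_walks[OF assms] by simp_all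

theorem lemma4p6:
  fixes H0 :: "'a hypergraph" and k :: nat
  assumes "k \<ge> 2"
    and "finite (fst H0)"
    and "k_uniform_hypergraph k H0"
    and "\<exists>t0. hypertriangles (ilth H0 t0) \<noteq> {}"
  shows "(\<lambda>t. real (card (hypertriangles (ilth H0 t))))
           \<in> \<Theta>(\<lambda>t. (real ((k - 1)^3 + 3 * (k - 1))) ^ t)"
proof -
  define c where "c = (k - 1)^3 + 3 * (k - 1)"
  define W where "W n = card (walks (ilth H0 n))" for n
  define T where "T n = card (hypertriangles (ilth H0 n))" for n
  note inv = ilth_inv[OF assms(1-3)]
  have c4: "c \<ge> 1" unfolding c_def using assms(1) by simp
  have Wstep: "W (Suc n) \<le> c * W n" for n
    using walks_step(1)[OF inv[of n]] by (simp add: W_def c_def)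
  have Tstep: "c * T n \<le> T (Suc n)" for n
    using walks_step(2)[OF inv[of n]] by (simp add: T_def c_def)
  have TW: "T n \<le> W n" for n
    unfolding T_def W_def using walks_step(3)[OF inv[of n]] tri_sub_g by (rule card_mono)
  have Wb: "W n \<le> c ^ n * W 0" for n
  proof (induction n)
    case 0 then show ?case by simp
  next
    case (Suc n)
    have "W (Suc n) \<le> c * W n" by (rule Wstep)
    also have "\<dots> \<le> c * (c ^ n * W 0)" using Suc by simp
    finally show ?case by (simp add: mult.assoc)
  qed
  obtain t0 where t0: "hypertriangles (ilth H0 t0) \<noteq> {}" using assms(4) by blast
  have "finite (hypertriangles (ilth H0 t0))"
    using walks_step(3)[OF inv[of t0]] tri_sub_g finite_subset by blast
  then have T0: "T t0 \<ge> 1" using t0 unfolding T_def by (simp add: Suc_le_eq card_gt_0_iff)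
  have Tb: "c ^ m \<le> T (t0 + m)" for m
  proof (induction m)
    case 0 then show ?case using T0 by simp
  next
    case (Suc m)
    have "c ^ Suc m = c * c ^ m" by simp
    also have "\<dots> \<le> c * T (t0 + m)" using Suc by simp
    also have "\<dots> \<le> T (t0 + Suc m)" using Tstep[of "t0 + m"] by simp
    finally show ?case .
  qed
  have cpos: "real c > 0" using c4 by simp
  have main: "(\<lambda>n. real (T n)) \<in> \<Theta>(\<lambda>n. real c ^ n)"
  proof (rule bigthetaI'[of "1 / real c ^ t0" "real (W 0) + 1"])
    show "0 < 1 / real c ^ t0" using cpos by simp
    show "0 < real (W 0) + 1" by simp
    show "\<forall>\<^sub>F x in at_top. 1 / real c ^ t0 * norm (real c ^ x) \<le> norm (real (T x)) \<and>
        norm (real (T x)) \<le> (real (W 0) + 1) * norm (real c ^ x)"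
    proof (rule eventually_at_top_linorderI[of t0])
      fix n assume n: "n \<ge> t0"
      then obtain m where nm: "n = t0 + m" using le_Suc_ex by blast
      have "1 / real c ^ t0 * norm (real c ^ n) = real c ^ m"
        using cpos unfolding nm by (simp add: power_add)
      also have "\<dots> \<le> real (T n)" using Tb[of m] unfolding nm by (metis of_nat_le_iff of_nat_power)
      finally have l: "1 / real c ^ t0 * norm (real c ^ n) \<le> norm (real (T n))" by simp
      have "T n \<le> c ^ n * W 0" using TW[of n] Wb[of n] by linarith
      then have "real (T n) \<le> real (c ^ n * W 0)" by (rule of_nat_mono)
      also have "\<dots> \<le> (real (W 0) + 1) * real c ^ n" using cpos by (simp add: algebra_simps)
      finally have r: "norm (real (T n)) \<le> (real (W 0) + 1) * norm (real c ^ n)" using cpos by simp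
      show "1 / real c ^ t0 * norm (real c ^ n) \<le> norm (real (T n)) \<and>
        norm (real (T n)) \<le> (real (W 0) + 1) * norm (real c ^ n)" using l r by blast
    qed
  qed
  then show ?thesis unfolding T_def c_def by simp
qed

end
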